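(* Let $t \ge 2$ and $d \ge 2$ be integers. Let $n \ge 2d$ be an integer for which there is an integer $r$ with $n^t \equiv r^t \pmod d$ and $0 \le r^t < d$. Then $\left\lfloor n^t/d \right\rfloor$ is composite. *)

theory Defs
  imports "HOL-Computational_Algebra.Primes" "HOL-Number_Theory.Cong" Complex_Main
begin

definition composite :: "int \<Rightarrow> bool" where
  "composite m \<longleftrightarrow> m > 1 \<and> \<not> prime m"

end

theory Submission
  imports Defs
begin

theorem lemma1:
  fixes t :: nat and d n :: int
  assumes "t \<ge> 2" and "d \<ge> 2" and "n \<ge> 2 * d"
    and "\<exists>r::int. [n ^ t = r ^ t] (mod d) \<and> 0 \<le> r ^ t \<and> r ^ t < d"
  shows "composite \<lfloor>(of_int n ^ t :: real) / of_int d\<rfloor>"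
proof -
  obtain r :: int where r: "[n ^ t = r ^ t] (mod d)" "0 \<le> r ^ t" "r ^ t < d"
    using assms(4) by blast
  define a where "a = \<bar>r\<bar>"
  have a0: "a \<ge> 0" unfolding a_def by simp
  have at: "a ^ t = r ^ t" unfolding a_def using r(2) by (metis abs_of_nonneg power_abs)
  have ad: "a < d"
  proof (rule ccontr)
    assume "\<not> a < d"
    then have "a \<ge> 1" using assms(2) by simp
    then have "a \<le> a ^ t" using assms(1) by (simp add: self_le_power)
    then show False using \<open>\<not> a < d\<close> at r(3) by simp
  qed
  define Q where "Q = n ^ t div d"
  have fl: "\<lfloor>(of_int n ^ t :: real) / of_int d\<rfloor> = Q"
    unfolding Q_def by (metis floor_divide_of_int_eq of_int_power)
  have "n ^ t mod d = a ^ t mod d" using r(1) at unfolding cong_def by simp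
  also have "\<dots> = a ^ t" using at r(2) r(3) by simp
  finally have md: "n ^ t mod d = a ^ t" .
  have QD: "Q * d = n ^ t - a ^ t" unfolding Q_def using md
    by (metis add_diff_cancel_right' div_mult_mod_eq)
  define S where "S = (\<Sum>i<t. a ^ (t - Suc i) * n ^ i)"
  have fact: "n ^ t - a ^ t = (n - a) * S" unfolding S_def by (rule power_diff_sumr2)
  have n1: "n \<ge> 1" using assms by simp
  have "n ^ (t - 1) \<le> S"
  proof -
    have "a ^ (t - Suc (t - 1)) * n ^ (t - 1) \<le> S" unfolding S_def
      by (rule member_le_sum) (use assms(1) a0 n1 in auto)
    then show ?thesis by simp
  qed
  moreover have "n \<le> n ^ (t - 1)" using n1 assms(1) by (simp add: self_le_power)
  ultimately have S2: "S \<ge> 2 * d" using assms(3) by linarith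
  have na: "n - a > d" using ad assms(3) by linarith
  have QD2: "Q * d = (n - a) * S" using QD fact by simp
  have "(n - a) * S > d * 1" using na S2 assms(2)
    by (intro mult_strict_mono') auto
  then have "Q * d > 1 * d" using QD2 by simp
  then have Q1: "Q > 1" using assms(2) by (simp add: mult_less_cancel_right)
  have np: "\<not> prime Q"
  proof
    assume p: "prime Q"
    have "Q dvd (n - a) * S" using QD2 by (metis dvd_triv_left)
    then have "Q dvd (n - a) \<or> Q dvd S" using p by (simp add: prime_dvd_mult_iff)
    then show False
    proof
      assume "Q dvd (n - a)"
      then obtain k where k: "n - a = Q * k" by blast
      then have "Q * d = Q * (k * S)" using QD2 by simp
      then have "d = k * S" using Q1 by simp
      moreover have "k > 0" using k na Q1 assms(2)
        by (metis zero_less_mult_pos less_trans zero_less_one order_le_less_trans zero_le_numeral pos2)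
      ultimately have "d \<ge> S" using S2 assms(2) mult_right_mono[of 1 k S] by simp
      then show False using S2 assms(2) by linarith
    next
      assume "Q dvd S"
      then obtain k where k: "S = Q * k" by blast
      then have "Q * d = Q * ((n - a) * k)" using QD2 by (simp add: ac_simps)
      then have dk: "d = (n - a) * k" using Q1 by simp
      then have "k > 0" using na assms(2) using zero_less_mult_pos[of "n - a" k] by linarith
      then have "(n - a) * 1 \<le> (n - a) * k" using na assms(2) by (intro mult_left_mono) auto
      then have "d \<ge> n - a" using dk by simp
      then show False using na by linarith
    qed
  qed
  show ?thesis unfolding fl composite_def using Q1 np by simp
qed

end
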